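(* Let $\psi\colon\mathcal B\to\mathcal A$ be a quasi-isomorphism of DGAs (a DGA morphism inducing an isomorphism $\psi^*$ in cohomology). (1) Suppose $a,b_1,\dots,b_n\in\mathcal A$ are closed, $|a|$ is even and each $a\wedge b_i$ is exact, so that $\langle a;b_1,\dots,b_n\rangle$ is defined, and let $a',b_i'\in\mathcal B$ be closed elements with $[\psi(a')]=[a]$ and $[\psi(b_i')]=[b_i]$. Then $\langle a';b_1',\dots,b_n'\rangle$ is defined in $\mathcal B$ and $\psi^*(\langle a';b_1',\dots,b_n'\rangle)=\langle a;b_1,\dots,b_n\rangle$. (2) Conversely, if $\langle a';b_1',\dots,b_n'\rangle$ is a defined $a'$-Massey product in $\mathcal B$ and $a=\psi(a')$, $b_i=\psi(b_i')$, then $\psi^*(\langle a';b_1',\dots,b_n'\rangle)=\langle a;b_1,\dots,b_n\rangle$.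
   Context: A DGA is a graded-commutative differential graded algebra over $\mathbb R$; $|x|$ denotes degree and $\overline{x}=(-1)^{|x|}x$. Given closed $a,b_1,\dots,b_n$ with $|a|$ even and each $a\wedge b_i$ exact, the $a$-Massey product is $\langle a;b_1,\dots,b_n\rangle=\{[\sum_{i=1}^n\overline{\xi_1}\wedge\cdots\wedge\overline{\xi_{i-1}}\wedge b_i\wedge\xi_{i+1}\wedge\cdots\wedge\xi_n] : d\xi_i=a\wedge b_i\}$, a subset of cohomology. *)

theory Defs
  imports Complex_Main
begin

text \<open>A (nonnegatively) graded-commutative DGA over the reals, carried by a type
 'a of class real_algebra_1 (associative unital real algebra), with grading
 G k (the homogeneous elements of degree k, k an integer, zero for k < 0) and
 differential d.\<close>

definition sgn_deg :: "int \<Rightarrow> real" where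
  "sgn_deg k = (if even k then 1 else -1)"

definition dga :: "(int \<Rightarrow> 'a::real_algebra_1 set) \<Rightarrow> ('a \<Rightarrow> 'a) \<Rightarrow> bool" where
  "dga G d \<longleftrightarrow>
     (\<forall>k. 0 \<in> G k \<and> (\<forall>x\<in>G k. \<forall>y\<in>G k. x + y \<in> G k) \<and> (\<forall>c. \<forall>x\<in>G k. c *\<^sub>R x \<in> G k))
   \<and> (\<forall>k<0. G k = {0})
   \<and> (\<forall>x. \<exists>!c::int \<Rightarrow> 'a. finite {k. c k \<noteq> 0} \<and> (\<forall>k. c k \<in> G k)
              \<and> x = (\<Sum>k\<in>{k. c k \<noteq> 0}. c k))
   \<and> 1 \<in> G 0
   \<and> (\<forall>j k x y. x \<in> G j \<longrightarrow> y \<in> G k \<longrightarrow> x * y \<in> G (j + k))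
   \<and> (\<forall>j k x y. x \<in> G j \<longrightarrow> y \<in> G k \<longrightarrow> x * y = sgn_deg (j * k) *\<^sub>R (y * x))
   \<and> linear d
   \<and> (\<forall>k. \<forall>x\<in>G k. d x \<in> G (k + 1))
   \<and> (\<forall>x. d (d x) = 0)
   \<and> (\<forall>j x y. x \<in> G j \<longrightarrow> d (x * y) = d x * y + sgn_deg j *\<^sub>R (x * d y))"

definition dga_hom ::
  "(int \<Rightarrow> 'b::real_algebra_1 set) \<Rightarrow> ('b \<Rightarrow> 'b) \<Rightarrow> (int \<Rightarrow> 'a::real_algebra_1 set) \<Rightarrow> ('a \<Rightarrow> 'a)
    \<Rightarrow> ('b \<Rightarrow> 'a) \<Rightarrow> bool" where
  "dga_hom GB dB GA dA \<psi> \<longleftrightarrow> linear \<psi> \<and> \<psi> 1 = 1 \<and> (\<forall>x y. \<psi> (x * y) = \<psi> x * \<psi> y)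
     \<and> (\<forall>k. \<psi> ` GB k \<subseteq> GA k) \<and> (\<forall>x. \<psi> (dB x) = dA (\<psi> x))"

definition exact_in :: "(int \<Rightarrow> 'a set) \<Rightarrow> ('a \<Rightarrow> 'a) \<Rightarrow> int \<Rightarrow> 'a \<Rightarrow> bool" where
  "exact_in G d k x \<longleftrightarrow> (\<exists>y\<in>G (k - 1). x = d y)"

definition cls :: "(int \<Rightarrow> 'a::real_vector set) \<Rightarrow> ('a \<Rightarrow> 'a) \<Rightarrow> int \<Rightarrow> 'a \<Rightarrow> 'a set" where
  "cls G d k x = {x + d y | y. y \<in> G (k - 1)}"

definition cohom :: "(int \<Rightarrow> 'a::real_vector set) \<Rightarrow> ('a \<Rightarrow> 'a) \<Rightarrow> int \<Rightarrow> 'a set set" where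
  "cohom G d k = {cls G d k x | x. x \<in> G k \<and> d x = 0}"

definition hmap :: "(int \<Rightarrow> 'a::real_vector set) \<Rightarrow> ('a \<Rightarrow> 'a) \<Rightarrow> int \<Rightarrow> ('b \<Rightarrow> 'a) \<Rightarrow> 'b set \<Rightarrow> 'a set" where
  "hmap GA dA k \<psi> c = cls GA dA k (\<psi> (SOME x. x \<in> c))"

definition quasi_iso ::
  "(int \<Rightarrow> 'b::real_algebra_1 set) \<Rightarrow> ('b \<Rightarrow> 'b) \<Rightarrow> (int \<Rightarrow> 'a::real_algebra_1 set) \<Rightarrow> ('a \<Rightarrow> 'a)
    \<Rightarrow> ('b \<Rightarrow> 'a) \<Rightarrow> bool" where
  "quasi_iso GB dB GA dA \<psi> \<longleftrightarrow> dga_hom GB dB GA dA \<psi>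
     \<and> (\<forall>k. bij_betw (hmap GA dA k \<psi>) (cohom GB dB k) (cohom GA dA k))"

definition bar :: "int \<Rightarrow> 'a::real_vector \<Rightarrow> 'a" where
  "bar k x = sgn_deg k *\<^sub>R x"

definition massey_deg :: "nat \<Rightarrow> int \<Rightarrow> (nat \<Rightarrow> int) \<Rightarrow> int" where
  "massey_deg n p q = (int n - 1) * (p - 1) + (\<Sum>i=1..n. q i)"

definition massey ::
  "(int \<Rightarrow> 'a::real_algebra_1 set) \<Rightarrow> ('a \<Rightarrow> 'a) \<Rightarrow> nat \<Rightarrow> int \<Rightarrow> 'a \<Rightarrow> (nat \<Rightarrow> int) \<Rightarrow> (nat \<Rightarrow> 'a)
     \<Rightarrow> 'a set set" where
  "massey G d n p a q b =
     {cls G d (massey_deg n p q)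
        (\<Sum>i=1..n. prod_list (map (\<lambda>j. bar (p + q j - 1) (\<xi> j)) [1..<i]) * b i
                    * prod_list (map \<xi> [i+1..<n+1]))
      | \<xi>. \<forall>i\<in>{1..n}. \<xi> i \<in> G (p + q i - 1) \<and> d (\<xi> i) = a * b i}"

definition massey_defined ::
  "(int \<Rightarrow> 'a::real_algebra_1 set) \<Rightarrow> ('a \<Rightarrow> 'a) \<Rightarrow> nat \<Rightarrow> int \<Rightarrow> 'a \<Rightarrow> (nat \<Rightarrow> int) \<Rightarrow> (nat \<Rightarrow> 'a)
     \<Rightarrow> bool" where
  "massey_defined G d n p a q b \<longleftrightarrow>
     a \<in> G p \<and> d a = 0 \<and> even p
     \<and> (\<forall>i\<in>{1..n}. b i \<in> G (q i) \<and> d (b i) = 0 \<and> exact_in G d (p + q i) (a * b i))"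

end

theory Submission
  imports Defs
begin

lemma sgn_deg_add: "sgn_deg (i + j) = sgn_deg i * sgn_deg j"
  by (simp add: sgn_deg_def)
lemma sgn_deg_sq: "sgn_deg i * sgn_deg i = 1"
  by (simp add: sgn_deg_def)
lemma sgn_deg_minus1: "sgn_deg (i - 1) = - sgn_deg i"
  by (simp add: sgn_deg_def)
lemma sgn_deg_plus1: "sgn_deg (i + 1) = - sgn_deg i"
  by (simp add: sgn_deg_def)
lemma sgn_deg_even_mult: "even p \<Longrightarrow> sgn_deg (p * j) = 1"
  by (simp add: sgn_deg_def)
lemma sgn_deg_even_mult2: "even p \<Longrightarrow> sgn_deg (j * p) = 1"
  by (simp add: sgn_deg_def)
lemma sgn_deg_even: "even p \<Longrightarrow> sgn_deg p = 1"
  by (simp add: sgn_deg_def)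
lemma sgn_deg_k: "even p \<Longrightarrow> sgn_deg (p + q - 1) = - sgn_deg q"
  by (simp add: sgn_deg_def)
lemma sgn_deg_odd_mult: "even p \<Longrightarrow> sgn_deg (j * (p - 1)) = sgn_deg j"
  by (simp add: sgn_deg_def)
lemma sgn_deg_odd_mult2: "even p \<Longrightarrow> sgn_deg ((p - 1) * j) = sgn_deg j"
  by (simp add: sgn_deg_def)


definition SS :: "nat \<Rightarrow> int \<Rightarrow> (nat \<Rightarrow> int) \<Rightarrow> (nat \<Rightarrow> 'a::real_algebra_1) \<Rightarrow> (nat \<Rightarrow> 'a) \<Rightarrow> nat \<Rightarrow> 'a" where
  "SS n p q b \<xi> m = (\<Sum>i=m..n. prod_list (map (\<lambda>j. bar (p + q j - 1) (\<xi> j)) [m..<i]) * b i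
                    * prod_list (map \<xi> [i+1..<n+1]))"
definition TT :: "nat \<Rightarrow> (nat \<Rightarrow> 'a::real_algebra_1) \<Rightarrow> nat \<Rightarrow> 'a" where
  "TT n \<xi> m = prod_list (map \<xi> [m..<n+1])"
definition degT :: "nat \<Rightarrow> int \<Rightarrow> (nat \<Rightarrow> int) \<Rightarrow> nat \<Rightarrow> int" where
  "degT n p q m = (\<Sum>j=m..n. p + q j - 1)"

lemma TT_end: "TT n \<xi> (Suc n) = 1" by (simp add: TT_def)
lemma SS_end: "SS n p q b \<xi> (Suc n) = 0" by (simp add: SS_def)
lemma degT_end: "degT n p q (Suc n) = 0" by (simp add: degT_def)
lemma TT_rec: "m \<le> n \<Longrightarrow> TT n \<xi> m = \<xi> m * TT n \<xi> (Suc m)"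
  using upt_conv_Cons[of m "Suc n"] by (simp add: TT_def del: upt_Suc)
lemma degT_rec: "m \<le> n \<Longrightarrow> degT n p q m = p + q m - 1 + degT n p q (Suc m)"
  by (simp add: degT_def sum.atLeast_Suc_atMost)
lemma SS_rec: "m \<le> n \<Longrightarrow> SS n p q b \<xi> m = b m * TT n \<xi> (Suc m) + bar (p + q m - 1) (\<xi> m) * SS n p q b \<xi> (Suc m)"
proof -
  assume mn: "m \<le> n"
  have "SS n p q b \<xi> m = b m * TT n \<xi> (Suc m) + (\<Sum>i=Suc m..n. prod_list (map (\<lambda>j. bar (p + q j - 1) (\<xi> j)) [m..<i]) * b i
                    * prod_list (map \<xi> [i+1..<n+1]))"
    unfolding SS_def TT_def using mn by (simp add: sum.atLeast_Suc_atMost)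
  also have "(\<Sum>i=Suc m..n. prod_list (map (\<lambda>j. bar (p + q j - 1) (\<xi> j)) [m..<i]) * b i
                    * prod_list (map \<xi> [i+1..<n+1]))
     = (\<Sum>i=Suc m..n. bar (p + q m - 1) (\<xi> m) * (prod_list (map (\<lambda>j. bar (p + q j - 1) (\<xi> j)) [Suc m..<i]) * b i
                    * prod_list (map \<xi> [i+1..<n+1])))"
    by (intro sum.cong refl) (simp add: upt_conv_Cons mult.assoc)
  also have "\<dots> = bar (p + q m - 1) (\<xi> m) * SS n p q b \<xi> (Suc m)"
    unfolding SS_def by (simp add: sum_distrib_left)
  finally show ?thesis .
qed
lemma degT_1: "degT n p q 1 + 1 - p = massey_deg n p q"
  unfolding degT_def massey_deg_def by (simp add: sum.distrib sum_subtractf algebra_simps)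

locale dgl =
  fixes G :: "int \<Rightarrow> 'a::real_algebra_1 set" and d :: "'a \<Rightarrow> 'a"
  assumes dga: "dga G d"
begin

lemmas D = dga[unfolded dga_def]
lemmas C1 = D[THEN conjunct1]
lemmas C3 = D[THEN conjunct2, THEN conjunct2, THEN conjunct1]
lemmas C4 = D[THEN conjunct2, THEN conjunct2, THEN conjunct2, THEN conjunct1]
lemmas C5 = D[THEN conjunct2, THEN conjunct2, THEN conjunct2, THEN conjunct2, THEN conjunct1]
lemmas C6 = D[THEN conjunct2, THEN conjunct2, THEN conjunct2, THEN conjunct2, THEN conjunct2, THEN conjunct1]
lemmas C7 = D[THEN conjunct2, THEN conjunct2, THEN conjunct2, THEN conjunct2, THEN conjunct2, THEN conjunct2, THEN conjunct1]
lemmas C8 = D[THEN conjunct2, THEN conjunct2, THEN conjunct2, THEN conjunct2, THEN conjunct2, THEN conjunct2, THEN conjunct2, THEN conjunct1]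
lemmas C9 = D[THEN conjunct2, THEN conjunct2, THEN conjunct2, THEN conjunct2, THEN conjunct2, THEN conjunct2, THEN conjunct2, THEN conjunct2, THEN conjunct1]
lemmas C10 = D[THEN conjunct2, THEN conjunct2, THEN conjunct2, THEN conjunct2, THEN conjunct2, THEN conjunct2, THEN conjunct2, THEN conjunct2, THEN conjunct2]
lemma G0: "0 \<in> G k" using C1[THEN spec, of k] by (rule conjunct1)
lemma Gadd: "x \<in> G k \<Longrightarrow> y \<in> G k \<Longrightarrow> x + y \<in> G k" using C1[THEN spec, of k, THEN conjunct2, THEN conjunct1] by blast
lemma Gscale: "x \<in> G k \<Longrightarrow> c *\<^sub>R x \<in> G k" using C1[THEN spec, of k, THEN conjunct2, THEN conjunct2] by blast
lemma Gneg: "x \<in> G k \<Longrightarrow> - x \<in> G k" using Gscale[of x k "-1"] by simp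
lemma Gdiff: "x \<in> G k \<Longrightarrow> y \<in> G k \<Longrightarrow> x - y \<in> G k" using Gadd[OF _ Gneg, of x k y] by simp
lemma G1: "1 \<in> G 0" using C4 .
lemma Gmul: "x \<in> G i \<Longrightarrow> y \<in> G j \<Longrightarrow> k = i + j \<Longrightarrow> x * y \<in> G k" using C5[rule_format, of x i y j] by simp
lemma comm: "x \<in> G i \<Longrightarrow> y \<in> G j \<Longrightarrow> x * y = sgn_deg (i * j) *\<^sub>R (y * x)" using C6[rule_format, of x i y j] by simp
lemma lin: "linear d" using C7 .
lemma dG: "x \<in> G k \<Longrightarrow> d x \<in> G (k + 1)" using C8 by simp
lemma dG': "x \<in> G k \<Longrightarrow> j = k + 1 \<Longrightarrow> d x \<in> G j" using dG by blast
lemma dd[simp]: "d (d x) = 0" using C9 by simp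
lemma leib: "x \<in> G j \<Longrightarrow> d (x * y) = d x * y + sgn_deg j *\<^sub>R (x * d y)" using C10[rule_format, of x j y] by simp
lemma d_add[simp]: "d (x + y) = d x + d y" using lin by (simp add: linear_add)
lemma d_diff[simp]: "d (x - y) = d x - d y" using lin by (simp add: linear_diff)
lemma d_scale[simp]: "d (c *\<^sub>R x) = c *\<^sub>R d x" using lin by (simp add: linear_scale)
lemma d_neg[simp]: "d (- x) = - d x" using lin by (simp add: linear_neg)
lemma d_0[simp]: "d 0 = 0" using lin by (simp add: linear_0)
lemma d_1[simp]: "d 1 = 0"
proof -
  have "d (1 * 1) = d 1 * 1 + sgn_deg 0 *\<^sub>R (1 * d 1)" by (rule leib[OF G1])
  then have "d 1 = d 1 + d 1" by (simp add: sgn_deg_def)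
  then show ?thesis by (metis add_cancel_left_right)
qed
lemma Gsum: "finite A \<Longrightarrow> (\<And>i. i \<in> A \<Longrightarrow> f i \<in> G k) \<Longrightarrow> sum f A \<in> G k"
  by (induction A rule: finite_induct) (auto intro: G0 Gadd)


lemma cls_shift: "z \<in> G (k - 1) \<Longrightarrow> cls G d k (x + d z) = cls G d k x"
  unfolding cls_def
proof (intro set_eqI iffI)
  fix w assume z: "z \<in> G (k - 1)"
  { assume "w \<in> {x + d z + d y |y. y \<in> G (k - 1)}"
    then obtain y where "w = x + d z + d y" "y \<in> G (k - 1)" by blast
    then show "w \<in> {x + d y |y. y \<in> G (k - 1)}" using z
      by (intro CollectI exI[of _ "z + y"]) (auto intro: Gadd simp: add.assoc) }
  { assume "w \<in> {x + d y |y. y \<in> G (k - 1)}"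
    then obtain y where "w = x + d y" "y \<in> G (k - 1)" by blast
    then show "w \<in> {x + d z + d y |y. y \<in> G (k - 1)}" using z
      by (intro CollectI exI[of _ "y - z"]) (auto intro: Gdiff) }
qed

lemma cls_eqI: "z \<in> G (k - 1) \<Longrightarrow> x - y = d z \<Longrightarrow> cls G d k x = cls G d k y"
  using cls_shift[of z k y] by (simp add: algebra_simps)

lemma cls_eqD: "cls G d k x = cls G d k y \<Longrightarrow> \<exists>z\<in>G (k - 1). x = y + d z"
proof -
  assume "cls G d k x = cls G d k y"
  moreover have "x \<in> cls G d k x" unfolding cls_def using G0[of "k-1"] by (auto intro!: exI[of _ 0])
  ultimately show ?thesis unfolding cls_def by auto
qed

lemma sq_zero: "x \<in> G i \<Longrightarrow> odd i \<Longrightarrow> x * x = 0"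
proof -
  assume "x \<in> G i" "odd i"
  then have "x * x = sgn_deg (i * i) *\<^sub>R (x * x)" using comm by blast
  also have "sgn_deg (i * i) = -1" using \<open>odd i\<close> by (simp add: sgn_deg_def)
  finally have h: "x * x = - (x * x)" by simp
  then have "x * x + x * x = 0" by (metis neg_eq_iff_add_eq_0)
  then have "(2::real) *\<^sub>R (x * x) = 0" by (simp add: scaleR_2)
  then show ?thesis by simp
qed


lemma comm_a: "a \<in> G p \<Longrightarrow> even p \<Longrightarrow> x \<in> G i \<Longrightarrow> x * a = a * x"
  using comm[of x i a p] by (simp add: sgn_deg_even_mult2)

lemma barG: "x \<in> G k \<Longrightarrow> bar k x \<in> G k" unfolding bar_def by (rule Gscale)

lemma mem_ST:
  assumes h: "\<forall>i\<in>{1..n}. \<xi> i \<in> G (p + q i - 1) \<and> b i \<in> G (q i)"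
    and m1: "1 \<le> m" and mn: "m \<le> Suc n"
  shows "TT n \<xi> m \<in> G (degT n p q m) \<and> SS n p q b \<xi> m \<in> G (degT n p q m + 1 - p)"
  using mn
proof (induction m rule: inc_induct)
  case base
  then show ?case by (simp add: TT_end SS_end degT_end G0 G1)
next
  case (step m')
  then have mn': "m' \<le> n" and i: "m' \<in> {1..n}" using m1 by auto
  then have x: "\<xi> m' \<in> G (p + q m' - 1)" and bm: "b m' \<in> G (q m')" using h by auto
  show ?case unfolding TT_rec[OF mn'] SS_rec[OF mn'] degT_rec[OF mn']
    using step.IH x bm
    by (auto intro!: Gmul Gadd barG)
qed


lemma dST:
  assumes ha: "a \<in> G p" "d a = 0" "even p"
    and h: "\<forall>i\<in>{1..n}. \<xi> i \<in> G (p + q i - 1) \<and> d (\<xi> i) = a * b i \<and> b i \<in> G (q i) \<and> d (b i) = 0"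
    and m1: "1 \<le> m" and mn: "m \<le> Suc n"
  shows "d (SS n p q b \<xi> m) = 0 \<and> d (TT n \<xi> m) = a * SS n p q b \<xi> m"
  using mn
proof (induction m rule: inc_induct)
  case base
  then show ?case by (simp add: TT_end SS_end)
next
  case (step m')
  then have mn': "m' \<le> n" and i: "m' \<in> {1..n}" using m1 by auto
  define x where "x = \<xi> m'"
  define bb where "bb = b m'"
  define T' where "T' = TT n \<xi> (Suc m')"
  define S' where "S' = SS n p q b \<xi> (Suc m')"
  define k where "k = p + q m' - 1"
  have x: "x \<in> G k" "d x = a * bb" and bm: "bb \<in> G (q m')" "d bb = 0"
    using h i unfolding x_def bb_def k_def by auto
  have IH: "d S' = 0" "d T' = a * S'" using step.IH unfolding S'_def T'_def by auto
  have ek: "sgn_deg k = - sgn_deg (q m')" unfolding k_def using ha(3) by (rule sgn_deg_k)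
  have xa: "x * a = a * x" using comm_a[OF ha(1) ha(3) x(1)] .
  have ba: "bb * a = a * bb" using comm_a[OF ha(1) ha(3) bm(1)] .
  have T: "TT n \<xi> m' = x * T'" unfolding x_def T'_def by (rule TT_rec[OF mn'])
  have S: "SS n p q b \<xi> m' = bb * T' + sgn_deg k *\<^sub>R (x * S')"
    unfolding bb_def T'_def S'_def x_def k_def SS_rec[OF mn'] bar_def by simp
  have "d (TT n \<xi> m') = a * bb * T' + sgn_deg k *\<^sub>R (x * (a * S'))"
    unfolding T leib[OF x(1)] x(2) IH ..
  also have "x * (a * S') = a * (x * S')" by (simp add: mult.assoc[symmetric] xa)
  finally have dT: "d (TT n \<xi> m') = a * SS n p q b \<xi> m'"
    unfolding S by (simp add: algebra_simps)
  have "d (SS n p q b \<xi> m') = d (bb * T') + sgn_deg k *\<^sub>R d (x * S')"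
    unfolding S by simp
  also have "d (bb * T') = sgn_deg (q m') *\<^sub>R (a * bb * S')"
    unfolding leib[OF bm(1)] bm(2) IH by (simp add: mult.assoc[symmetric] ba)
  also have "d (x * S') = a * bb * S'"
    unfolding leib[OF x(1)] x(2) IH by simp
  finally have dS: "d (SS n p q b \<xi> m') = 0" unfolding ek by simp
  show ?case using dS dT by simp
qed


lemma inv_theta:
  assumes ha: "a \<in> G p" "d a = 0" "even p"
    and h: "\<forall>i\<in>{1..n}. \<xi> i \<in> G (p + q i - 1) \<and> d (\<xi> i) = a * b i \<and> b i \<in> G (q i) \<and> d (b i) = 0"
    and ht: "\<forall>i\<in>{1..n}. \<theta> i \<in> G (p + q i - 1 - 1)"
    and m1: "1 \<le> m" and mn: "m \<le> Suc n"
  shows "\<exists>E F. E \<in> G (degT n p q m - p) \<and> F \<in> G (degT n p q m - 1)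
     \<and> SS n p q b (\<lambda>i. \<xi> i + d (\<theta> i)) m - SS n p q b \<xi> m = d E
     \<and> TT n (\<lambda>i. \<xi> i + d (\<theta> i)) m - TT n \<xi> m = d F + a * E"
  using mn
proof (induction m rule: inc_induct)
  case base
  show ?case by (rule exI[of _ 0], rule exI[of _ 0]) (simp add: TT_end SS_end G0)
next
  case (step m')
  define \<xi>2 where "\<xi>2 = (\<lambda>i. \<xi> i + d (\<theta> i))"
  have h2: "\<forall>i\<in>{1..n}. \<xi>2 i \<in> G (p + q i - 1) \<and> d (\<xi>2 i) = a * b i \<and> b i \<in> G (q i) \<and> d (b i) = 0"
    using h ht unfolding \<xi>2_def by (auto intro!: Gadd dG')
  from step have mn': "m' \<le> n" and i: "m' \<in> {1..n}" using m1 by auto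
  from step.IH obtain E F where EF: "E \<in> G (degT n p q (Suc m') - p)" "F \<in> G (degT n p q (Suc m') - 1)"
     "SS n p q b \<xi>2 (Suc m') - SS n p q b \<xi> (Suc m') = d E"
     "TT n \<xi>2 (Suc m') - TT n \<xi> (Suc m') = d F + a * E" unfolding \<xi>2_def by blast
  define x where "x = \<xi> m'"
  define th where "th = \<theta> m'"
  define bb where "bb = b m'"
  define T' where "T' = TT n \<xi> (Suc m')"
  define S' where "S' = SS n p q b \<xi> (Suc m')"
  define T2 where "T2 = TT n \<xi>2 (Suc m')"
  define S2 where "S2 = SS n p q b \<xi>2 (Suc m')"
  define k where "k = p + q m' - 1"
  define D where "D = degT n p q (Suc m')"
  have x: "x \<in> G k" "d x = a * bb" and bm: "bb \<in> G (q m')" "d bb = 0" and th: "th \<in> G (k - 1)"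
    using h ht i unfolding x_def bb_def k_def th_def by auto
  have IH2: "d S2 = 0" "d T2 = a * S2" using dST[OF ha h2, of "Suc m'"] mn' unfolding S2_def T2_def by auto
  have mem2: "T2 \<in> G D" "S2 \<in> G (D + 1 - p)" using mem_ST[of n \<xi>2 p q b "Suc m'"] h2 mn'
    unfolding S2_def T2_def D_def by auto
  have E: "E \<in> G (D - p)" "S2 - S' = d E" and F: "F \<in> G (D - 1)" "T2 - T' = d F + a * E"
    using EF unfolding D_def S2_def S'_def T2_def T'_def by auto
  have ek: "sgn_deg k = - sgn_deg (q m')" unfolding k_def using ha(3) by (rule sgn_deg_k)
  have xa: "x * a = a * x" using comm_a[OF ha(1) ha(3) x(1)] .
  have ba: "bb * a = a * bb" using comm_a[OF ha(1) ha(3) bm(1)] .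
  have ta: "th * a = a * th" using comm_a[OF ha(1) ha(3) th] .
  have xa': "\<And>z. x * (a * z) = a * (x * z)" by (simp add: mult.assoc[symmetric] xa)
  have ba': "\<And>z. bb * (a * z) = a * (bb * z)" by (simp add: mult.assoc[symmetric] ba)
  have ta': "\<And>z. th * (a * z) = a * (th * z)" by (simp add: mult.assoc[symmetric] ta)
  have dg: "degT n p q m' = k + D" unfolding k_def D_def by (rule degT_rec[OF mn'])
  have T: "TT n \<xi> m' = x * T'" unfolding x_def T'_def by (rule TT_rec[OF mn'])
  have S: "SS n p q b \<xi> m' = bb * T' + sgn_deg k *\<^sub>R (x * S')"
    unfolding bb_def T'_def S'_def x_def k_def SS_rec[OF mn'] bar_def by simp
  have T2': "TT n \<xi>2 m' = (x + d th) * T2" unfolding x_def T2_def th_def \<xi>2_def by (rule TT_rec[OF mn'])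
  have S2': "SS n p q b \<xi>2 m' = bb * T2 + sgn_deg k *\<^sub>R ((x + d th) * S2)"
    unfolding bb_def T2_def S2_def x_def k_def th_def \<xi>2_def SS_rec[OF mn'] bar_def by simp
  define E' where "E' = sgn_deg (q m') *\<^sub>R (bb * F) + sgn_deg k *\<^sub>R (th * S2) + x * E"
  define F' where "F' = th * T2 + sgn_deg k *\<^sub>R (x * F)"
  have sq: "sgn_deg (q m') * sgn_deg (q m') = 1" by (rule sgn_deg_sq)
  have dE': "d E' = bb * d F + sgn_deg k *\<^sub>R (d th * S2) + a * bb * E + sgn_deg k *\<^sub>R (x * d E)"
    unfolding E'_def by (simp add: leib[OF bm(1)] leib[OF th] leib[OF x(1)] IH2 bm x sq
       scaleR_add_right algebra_simps)
  have "SS n p q b \<xi>2 m' - SS n p q b \<xi> m' = bb * (T2 - T') + sgn_deg k *\<^sub>R (d th * S2)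
       + sgn_deg k *\<^sub>R (x * (S2 - S'))"
    unfolding S S2' by (simp add: algebra_simps)
  also have "\<dots> = d E'" unfolding dE' F(2) E(2) by (simp add: algebra_simps ba')
  finally have Seq: "SS n p q b \<xi>2 m' - SS n p q b \<xi> m' = d E'" .
  have dF': "d F' = d th * T2 + sgn_deg (k - 1) *\<^sub>R (th * (a * S2)) + sgn_deg k *\<^sub>R (a * bb * F)
       + sgn_deg k *\<^sub>R (sgn_deg k *\<^sub>R (x * d F))"
    unfolding F'_def by (simp add: leib[OF th] leib[OF x(1)] IH2 x scaleR_add_right)
  have "TT n \<xi>2 m' - TT n \<xi> m' = d th * T2 + x * (T2 - T')"
    unfolding T T2' by (simp add: algebra_simps)
  also have "\<dots> = d F' + a * E'"
    unfolding dF' F(2) E'_def sgn_deg_minus1 ek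
    by (simp add: algebra_simps xa' ta' sq)
  finally have Teq: "TT n \<xi>2 m' - TT n \<xi> m' = d F' + a * E'" .
  have "bb * F \<in> G (k + D - p)" by (rule Gmul[OF bm(1) F(1)]) (simp add: k_def)
  moreover have "th * S2 \<in> G (k + D - p)" by (rule Gmul[OF th mem2(2)]) simp
  moreover have "x * E \<in> G (k + D - p)" by (rule Gmul[OF x(1) E(1)]) simp
  ultimately have E'mem: "E' \<in> G (degT n p q m' - p)" unfolding dg E'_def
    by (intro Gadd Gscale)
  have "th * T2 \<in> G (k + D - 1)" by (rule Gmul[OF th mem2(1)]) simp
  moreover have "x * F \<in> G (k + D - 1)" by (rule Gmul[OF x(1) F(1)]) simp
  ultimately have F'mem: "F' \<in> G (degT n p q m' - 1)" unfolding dg F'_def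
    by (intro Gadd Gscale)
  show ?case unfolding \<xi>2_def[symmetric] using E'mem F'mem Seq Teq by blast
qed


lemma inv_beta:
  assumes ha: "a \<in> G p" "d a = 0" "even p"
    and h: "\<forall>i\<in>{1..n}. \<xi> i \<in> G (p + q i - 1) \<and> d (\<xi> i) = a * b i \<and> b i \<in> G (q i) \<and> d (b i) = 0"
    and hbt: "\<forall>i\<in>{1..n}. \<beta> i \<in> G (q i - 1)"
    and m1: "1 \<le> m" and mn: "m \<le> Suc n"
  shows "\<exists>E F. E \<in> G (degT n p q m - p) \<and> F \<in> G (degT n p q m - 1)
     \<and> SS n p q (\<lambda>i. b i + d (\<beta> i)) (\<lambda>i. \<xi> i + a * \<beta> i) m - SS n p q b \<xi> m = d E
     \<and> TT n (\<lambda>i. \<xi> i + a * \<beta> i) m - TT n \<xi> m = d F + a * E"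
  using mn
proof (induction m rule: inc_induct)
  case base
  show ?case by (rule exI[of _ 0], rule exI[of _ 0]) (simp add: TT_end SS_end G0)
next
  case (step m')
  define \<xi>2 where "\<xi>2 = (\<lambda>i. \<xi> i + a * \<beta> i)"
  define b2 where "b2 = (\<lambda>i. b i + d (\<beta> i))"
  have h2: "\<forall>i\<in>{1..n}. \<xi>2 i \<in> G (p + q i - 1) \<and> d (\<xi>2 i) = a * b2 i \<and> b2 i \<in> G (q i) \<and> d (b2 i) = 0"
  proof
    fix i assume i: "i \<in> {1..n}"
    then have hi: "\<xi> i \<in> G (p + q i - 1)" "d (\<xi> i) = a * b i" "b i \<in> G (q i)" "d (b i) = 0"
      "\<beta> i \<in> G (q i - 1)" using h hbt by auto
    have "a * \<beta> i \<in> G (p + q i - 1)" by (rule Gmul[OF ha(1) hi(5)]) simp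
    moreover have "d (\<beta> i) \<in> G (q i)" by (rule dG'[OF hi(5)]) simp
    moreover have "d (a * \<beta> i) = a * d (\<beta> i)" using leib[OF ha(1)] ha by (simp add: sgn_deg_even)
    ultimately show "\<xi>2 i \<in> G (p + q i - 1) \<and> d (\<xi>2 i) = a * b2 i \<and> b2 i \<in> G (q i) \<and> d (b2 i) = 0"
      unfolding \<xi>2_def b2_def using hi by (auto intro: Gadd simp: distrib_left)
  qed
  from step have mn': "m' \<le> n" and i: "m' \<in> {1..n}" using m1 by auto
  from step.IH obtain E F where EF: "E \<in> G (degT n p q (Suc m') - p)" "F \<in> G (degT n p q (Suc m') - 1)"
     "SS n p q b2 \<xi>2 (Suc m') - SS n p q b \<xi> (Suc m') = d E"
     "TT n \<xi>2 (Suc m') - TT n \<xi> (Suc m') = d F + a * E" unfolding \<xi>2_def b2_def by blast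
  define x where "x = \<xi> m'"
  define bt where "bt = \<beta> m'"
  define bb where "bb = b m'"
  define T' where "T' = TT n \<xi> (Suc m')"
  define S' where "S' = SS n p q b \<xi> (Suc m')"
  define T2 where "T2 = TT n \<xi>2 (Suc m')"
  define S2 where "S2 = SS n p q b2 \<xi>2 (Suc m')"
  define k where "k = p + q m' - 1"
  define D where "D = degT n p q (Suc m')"
  have x: "x \<in> G k" "d x = a * bb" and bm: "bb \<in> G (q m')" "d bb = 0" and bt: "bt \<in> G (q m' - 1)"
    using h hbt i unfolding x_def bb_def k_def bt_def by auto
  have IH2: "d S2 = 0" "d T2 = a * S2" using dST[OF ha h2, of "Suc m'"] mn' unfolding S2_def T2_def by auto
  have mem2: "T2 \<in> G D" "S2 \<in> G (D + 1 - p)" using mem_ST[of n \<xi>2 p q b2 "Suc m'"] h2 mn'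
    unfolding S2_def T2_def D_def by auto
  have E: "E \<in> G (D - p)" "S2 - S' = d E" and F: "F \<in> G (D - 1)" "T2 - T' = d F + a * E"
    using EF unfolding D_def S2_def S'_def T2_def T'_def by auto
  have ek: "sgn_deg k = - sgn_deg (q m')" unfolding k_def using ha(3) by (rule sgn_deg_k)
  have xa: "x * a = a * x" using comm_a[OF ha(1) ha(3) x(1)] .
  have ba: "bb * a = a * bb" using comm_a[OF ha(1) ha(3) bm(1)] .
  have ta: "bt * a = a * bt" using comm_a[OF ha(1) ha(3) bt] .
  have xa': "\<And>z. x * (a * z) = a * (x * z)" by (simp add: mult.assoc[symmetric] xa)
  have ba': "\<And>z. bb * (a * z) = a * (bb * z)" by (simp add: mult.assoc[symmetric] ba)
  have ta': "\<And>z. bt * (a * z) = a * (bt * z)" by (simp add: mult.assoc[symmetric] ta)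
  have dg: "degT n p q m' = k + D" unfolding k_def D_def by (rule degT_rec[OF mn'])
  have T: "TT n \<xi> m' = x * T'" unfolding x_def T'_def by (rule TT_rec[OF mn'])
  have S: "SS n p q b \<xi> m' = bb * T' + sgn_deg k *\<^sub>R (x * S')"
    unfolding bb_def T'_def S'_def x_def k_def SS_rec[OF mn'] bar_def by simp
  have T2': "TT n \<xi>2 m' = (x + a * bt) * T2" unfolding x_def T2_def bt_def \<xi>2_def by (rule TT_rec[OF mn'])
  have S2': "SS n p q b2 \<xi>2 m' = (bb + d bt) * T2 + sgn_deg k *\<^sub>R ((x + a * bt) * S2)"
    unfolding bb_def T2_def S2_def x_def k_def bt_def \<xi>2_def b2_def SS_rec[OF mn'] bar_def by simp
  define E' where "E' = bt * T2 + sgn_deg (q m') *\<^sub>R (bb * F) + x * E"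
  define F' where "F' = sgn_deg k *\<^sub>R (x * F)"
  have sq: "sgn_deg (q m') * sgn_deg (q m') = 1" by (rule sgn_deg_sq)
  have dE': "d E' = d bt * T2 + sgn_deg (q m' - 1) *\<^sub>R (bt * (a * S2)) + bb * d F + a * bb * E + sgn_deg k *\<^sub>R (x * d E)"
    unfolding E'_def by (simp add: leib[OF bm(1)] leib[OF bt] leib[OF x(1)] IH2 bm x sq
       scaleR_add_right algebra_simps)
  have "SS n p q b2 \<xi>2 m' - SS n p q b \<xi> m' = d bt * T2 + bb * (T2 - T') + sgn_deg k *\<^sub>R (a * bt * S2)
       + sgn_deg k *\<^sub>R (x * (S2 - S'))"
    unfolding S S2' by (simp add: algebra_simps)
  also have "\<dots> = d E'" unfolding dE' F(2) E(2) sgn_deg_minus1 ek by (simp add: algebra_simps ba' ta')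
  finally have Seq: "SS n p q b2 \<xi>2 m' - SS n p q b \<xi> m' = d E'" .
  have dF': "d F' = sgn_deg k *\<^sub>R (a * bb * F) + sgn_deg k *\<^sub>R (sgn_deg k *\<^sub>R (x * d F))"
    unfolding F'_def by (simp add: leib[OF x(1)] x scaleR_add_right)
  have "TT n \<xi>2 m' - TT n \<xi> m' = a * bt * T2 + x * (T2 - T')"
    unfolding T T2' by (simp add: algebra_simps)
  also have "\<dots> = d F' + a * E'"
    unfolding dF' F(2) E'_def ek
    by (simp add: algebra_simps xa' sq)
  finally have Teq: "TT n \<xi>2 m' - TT n \<xi> m' = d F' + a * E'" .
  have "bt * T2 \<in> G (k + D - p)" by (rule Gmul[OF bt mem2(1)]) (simp add: k_def)
  moreover have "bb * F \<in> G (k + D - p)" by (rule Gmul[OF bm(1) F(1)]) (simp add: k_def)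
  moreover have "x * E \<in> G (k + D - p)" by (rule Gmul[OF x(1) E(1)]) simp
  ultimately have E'mem: "E' \<in> G (degT n p q m' - p)" unfolding dg E'_def
    by (intro Gadd Gscale)
  have "x * F \<in> G (k + D - 1)" by (rule Gmul[OF x(1) F(1)]) simp
  then have F'mem: "F' \<in> G (degT n p q m' - 1)" unfolding dg F'_def
    by (intro Gadd Gscale)
  show ?case unfolding \<xi>2_def[symmetric] b2_def[symmetric] using E'mem F'mem Seq Teq by blast
qed


lemma inv_alpha:
  assumes ha: "a \<in> G p" "d a = 0" "even p"
    and h: "\<forall>i\<in>{1..n}. \<xi> i \<in> G (p + q i - 1) \<and> d (\<xi> i) = a * b i \<and> b i \<in> G (q i) \<and> d (b i) = 0"
    and hal: "\<alpha> \<in> G (p - 1)"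
    and m1: "1 \<le> m" and mn: "m \<le> Suc n"
  shows "\<exists>E F. E \<in> G (degT n p q m - p) \<and> F \<in> G (degT n p q m - 1)
     \<and> SS n p q b (\<lambda>i. \<xi> i + \<alpha> * b i) m - SS n p q b \<xi> m = d E
     \<and> TT n (\<lambda>i. \<xi> i + \<alpha> * b i) m - TT n \<xi> m = d F + a * E + \<alpha> * SS n p q b (\<lambda>i. \<xi> i + \<alpha> * b i) m"
  using mn
proof (induction m rule: inc_induct)
  case base
  show ?case by (rule exI[of _ 0], rule exI[of _ 0]) (simp add: TT_end SS_end G0)
next
  case (step m')
  define \<xi>2 where "\<xi>2 = (\<lambda>i. \<xi> i + \<alpha> * b i)"
  have h2: "\<forall>i\<in>{1..n}. \<xi>2 i \<in> G (p + q i - 1) \<and> b i \<in> G (q i)"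
  proof
    fix i assume i: "i \<in> {1..n}"
    then have hi: "\<xi> i \<in> G (p + q i - 1)" "b i \<in> G (q i)" using h by auto
    have "\<alpha> * b i \<in> G (p + q i - 1)" by (rule Gmul[OF hal hi(2)]) simp
    then show "\<xi>2 i \<in> G (p + q i - 1) \<and> b i \<in> G (q i)"
      unfolding \<xi>2_def using hi by (auto intro: Gadd)
  qed
  from step have mn': "m' \<le> n" and i: "m' \<in> {1..n}" using m1 by auto
  from step.IH obtain E F where EF: "E \<in> G (degT n p q (Suc m') - p)" "F \<in> G (degT n p q (Suc m') - 1)"
     "SS n p q b \<xi>2 (Suc m') - SS n p q b \<xi> (Suc m') = d E"
     "TT n \<xi>2 (Suc m') - TT n \<xi> (Suc m') = d F + a * E + \<alpha> * SS n p q b \<xi>2 (Suc m')"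
     unfolding \<xi>2_def by blast
  define x where "x = \<xi> m'"
  define bb where "bb = b m'"
  define T' where "T' = TT n \<xi> (Suc m')"
  define S' where "S' = SS n p q b \<xi> (Suc m')"
  define T2 where "T2 = TT n \<xi>2 (Suc m')"
  define S2 where "S2 = SS n p q b \<xi>2 (Suc m')"
  define k where "k = p + q m' - 1"
  define D where "D = degT n p q (Suc m')"
  have x: "x \<in> G k" "d x = a * bb" and bm: "bb \<in> G (q m')" "d bb = 0"
    using h i unfolding x_def bb_def k_def by auto
  have mem2: "T2 \<in> G D" "S2 \<in> G (D + 1 - p)" using mem_ST[of n \<xi>2 p q b "Suc m'"] h2 mn'
    unfolding S2_def T2_def D_def by auto
  have E: "E \<in> G (D - p)" "S2 - S' = d E" and F: "F \<in> G (D - 1)" "T2 - T' = d F + a * E + \<alpha> * S2"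
    using EF unfolding D_def S2_def S'_def T2_def T'_def by auto
  have ek: "sgn_deg k = - sgn_deg (q m')" unfolding k_def using ha(3) by (rule sgn_deg_k)
  have xa: "x * a = a * x" using comm_a[OF ha(1) ha(3) x(1)] .
  have ba: "bb * a = a * bb" using comm_a[OF ha(1) ha(3) bm(1)] .
  have xa': "\<And>z. x * (a * z) = a * (x * z)" by (simp add: mult.assoc[symmetric] xa)
  have ba': "\<And>z. bb * (a * z) = a * (bb * z)" by (simp add: mult.assoc[symmetric] ba)
  have bal: "bb * \<alpha> = sgn_deg (q m') *\<^sub>R (\<alpha> * bb)"
    using comm[OF bm(1) hal] ha(3) by (simp add: sgn_deg_odd_mult)
  have xal: "x * \<alpha> = sgn_deg k *\<^sub>R (\<alpha> * x)"
    using comm[OF x(1) hal] ha(3) by (simp add: sgn_deg_odd_mult)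
  have aa: "\<alpha> * \<alpha> = 0" by (rule sq_zero[OF hal]) (use ha(3) in simp)
  have bal': "\<And>z. bb * (\<alpha> * z) = sgn_deg (q m') *\<^sub>R (\<alpha> * (bb * z))" by (simp add: mult.assoc[symmetric] bal)
  have xal': "\<And>z. x * (\<alpha> * z) = sgn_deg k *\<^sub>R (\<alpha> * (x * z))" by (simp add: mult.assoc[symmetric] xal)
  have aa': "\<And>z. \<alpha> * (\<alpha> * z) = 0" by (simp add: mult.assoc[symmetric] aa)
  have dg: "degT n p q m' = k + D" unfolding k_def D_def by (rule degT_rec[OF mn'])
  have T: "TT n \<xi> m' = x * T'" unfolding x_def T'_def by (rule TT_rec[OF mn'])
  have S: "SS n p q b \<xi> m' = bb * T' + sgn_deg k *\<^sub>R (x * S')"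
    unfolding bb_def T'_def S'_def x_def k_def SS_rec[OF mn'] bar_def by simp
  have T2': "TT n \<xi>2 m' = (x + \<alpha> * bb) * T2" unfolding x_def T2_def bb_def \<xi>2_def by (rule TT_rec[OF mn'])
  have S2': "SS n p q b \<xi>2 m' = bb * T2 + sgn_deg k *\<^sub>R ((x + \<alpha> * bb) * S2)"
    unfolding bb_def T2_def S2_def x_def k_def \<xi>2_def SS_rec[OF mn'] bar_def by simp
  define E' where "E' = sgn_deg (q m') *\<^sub>R (bb * F) + x * E"
  define F' where "F' = sgn_deg k *\<^sub>R (x * F)"
  have sq: "sgn_deg (q m') * sgn_deg (q m') = 1" by (rule sgn_deg_sq)
  have dE': "d E' = bb * d F + a * bb * E + sgn_deg k *\<^sub>R (x * d E)"
    unfolding E'_def by (simp add: leib[OF bm(1)] leib[OF x(1)] bm x sq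
       scaleR_add_right algebra_simps)
  have "SS n p q b \<xi>2 m' - SS n p q b \<xi> m' = bb * (T2 - T') + sgn_deg k *\<^sub>R (\<alpha> * bb * S2)
       + sgn_deg k *\<^sub>R (x * (S2 - S'))"
    unfolding S S2' by (simp add: algebra_simps)
  also have "\<dots> = d E'" unfolding dE' F(2) E(2) ek by (simp add: algebra_simps ba' bal')
  finally have Seq: "SS n p q b \<xi>2 m' - SS n p q b \<xi> m' = d E'" .
  have dF': "d F' = sgn_deg k *\<^sub>R (a * bb * F) + sgn_deg k *\<^sub>R (sgn_deg k *\<^sub>R (x * d F))"
    unfolding F'_def by (simp add: leib[OF x(1)] x scaleR_add_right)
  have "TT n \<xi>2 m' - TT n \<xi> m' = \<alpha> * bb * T2 + x * (T2 - T')"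
    unfolding T T2' by (simp add: algebra_simps)
  also have "\<dots> = d F' + a * E' + \<alpha> * SS n p q b \<xi>2 m'"
    unfolding dF' F(2) E'_def S2' ek
    by (simp add: algebra_simps xa' xal' aa' sq ek)
  finally have Teq: "TT n \<xi>2 m' - TT n \<xi> m' = d F' + a * E' + \<alpha> * SS n p q b \<xi>2 m'" .
  have "bb * F \<in> G (k + D - p)" by (rule Gmul[OF bm(1) F(1)]) (simp add: k_def)
  moreover have "x * E \<in> G (k + D - p)" by (rule Gmul[OF x(1) E(1)]) simp
  ultimately have E'mem: "E' \<in> G (degT n p q m' - p)" unfolding dg E'_def
    by (intro Gadd Gscale)
  have "x * F \<in> G (k + D - 1)" by (rule Gmul[OF x(1) F(1)]) simp
  then have F'mem: "F' \<in> G (degT n p q m' - 1)" unfolding dg F'_def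
    by (intro Gadd Gscale)
  show ?case unfolding \<xi>2_def[symmetric] using E'mem F'mem Seq Teq by blast
qed


lemma massey_SS: "massey G d n p a q b = {cls G d (massey_deg n p q) (SS n p q b \<xi> 1) | \<xi>.
   \<forall>i\<in>{1..n}. \<xi> i \<in> G (p + q i - 1) \<and> d (\<xi> i) = a * b i}"
  unfolding massey_def SS_def by simp

lemma massey_cong: "\<forall>i\<in>{1..n}. b i = b' i \<Longrightarrow> massey G d n p a q b = massey G d n p a q b'"
proof -
  assume hb: "\<forall>i\<in>{1..n}. b i = b' i"
  have "\<And>\<xi>. SS n p q b \<xi> 1 = SS n p q b' \<xi> 1" unfolding SS_def using hb by (intro sum.cong) auto
  then show ?thesis unfolding massey_SS using hb by simp
qed

lemma cls_SS_eq:
  assumes "E \<in> G (degT n p q 1 - p)" "X - Y = d E"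
  shows "cls G d (massey_deg n p q) X = cls G d (massey_deg n p q) Y"
proof (rule cls_eqI[of E])
  have "degT n p q 1 - p = massey_deg n p q - 1" using degT_1[of n p q] by simp
  then show "E \<in> G (massey_deg n p q - 1)" using assms(1) by simp
qed (rule assms(2))

lemma M_alpha_sub:
  assumes ha: "a \<in> G p" "d a = 0" "even p"
    and hb: "\<forall>i\<in>{1..n}. b i \<in> G (q i) \<and> d (b i) = 0"
    and hal: "\<alpha> \<in> G (p - 1)"
  shows "massey G d n p a q b \<subseteq> massey G d n p (a + d \<alpha>) q b"
proof
  fix c assume "c \<in> massey G d n p a q b"
  then obtain \<xi> where c: "c = cls G d (massey_deg n p q) (SS n p q b \<xi> 1)"
    and sol: "\<forall>i\<in>{1..n}. \<xi> i \<in> G (p + q i - 1) \<and> d (\<xi> i) = a * b i" unfolding massey_SS by blast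
  have h: "\<forall>i\<in>{1..n}. \<xi> i \<in> G (p + q i - 1) \<and> d (\<xi> i) = a * b i \<and> b i \<in> G (q i) \<and> d (b i) = 0"
    using sol hb by auto
  obtain E F where EF: "E \<in> G (degT n p q 1 - p)"
     "SS n p q b (\<lambda>i. \<xi> i + \<alpha> * b i) 1 - SS n p q b \<xi> 1 = d E"
    using inv_alpha[OF ha h hal, of 1] by auto
  have sol2: "\<forall>i\<in>{1..n}. \<xi> i + \<alpha> * b i \<in> G (p + q i - 1) \<and> d (\<xi> i + \<alpha> * b i) = (a + d \<alpha>) * b i"
  proof
    fix i assume i: "i \<in> {1..n}"
    then have hi: "\<xi> i \<in> G (p + q i - 1)" "d (\<xi> i) = a * b i" "b i \<in> G (q i)" "d (b i) = 0" using h by auto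
    have "\<alpha> * b i \<in> G (p + q i - 1)" by (rule Gmul[OF hal hi(3)]) simp
    then show "\<xi> i + \<alpha> * b i \<in> G (p + q i - 1) \<and> d (\<xi> i + \<alpha> * b i) = (a + d \<alpha>) * b i"
      using hi by (auto intro: Gadd simp: leib[OF hal] distrib_right)
  qed
  have "c = cls G d (massey_deg n p q) (SS n p q b (\<lambda>i. \<xi> i + \<alpha> * b i) 1)"
    unfolding c by (rule sym, rule cls_SS_eq[OF EF(1) EF(2)])
  then show "c \<in> massey G d n p (a + d \<alpha>) q b" unfolding massey_SS using sol2 by blast
qed

lemma M_beta_sub:
  assumes ha: "a \<in> G p" "d a = 0" "even p"
    and hb: "\<forall>i\<in>{1..n}. b i \<in> G (q i) \<and> d (b i) = 0"
    and hbt: "\<forall>i\<in>{1..n}. \<beta> i \<in> G (q i - 1)"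
  shows "massey G d n p a q b \<subseteq> massey G d n p a q (\<lambda>i. b i + d (\<beta> i))"
proof
  fix c assume "c \<in> massey G d n p a q b"
  then obtain \<xi> where c: "c = cls G d (massey_deg n p q) (SS n p q b \<xi> 1)"
    and sol: "\<forall>i\<in>{1..n}. \<xi> i \<in> G (p + q i - 1) \<and> d (\<xi> i) = a * b i" unfolding massey_SS by blast
  have h: "\<forall>i\<in>{1..n}. \<xi> i \<in> G (p + q i - 1) \<and> d (\<xi> i) = a * b i \<and> b i \<in> G (q i) \<and> d (b i) = 0"
    using sol hb by auto
  obtain E F where EF: "E \<in> G (degT n p q 1 - p)"
     "SS n p q (\<lambda>i. b i + d (\<beta> i)) (\<lambda>i. \<xi> i + a * \<beta> i) 1 - SS n p q b \<xi> 1 = d E"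
    using inv_beta[OF ha h hbt, of 1] by auto
  have sol2: "\<forall>i\<in>{1..n}. \<xi> i + a * \<beta> i \<in> G (p + q i - 1) \<and> d (\<xi> i + a * \<beta> i) = a * (b i + d (\<beta> i))"
  proof
    fix i assume i: "i \<in> {1..n}"
    then have hi: "\<xi> i \<in> G (p + q i - 1)" "d (\<xi> i) = a * b i" "\<beta> i \<in> G (q i - 1)" using h hbt by auto
    have "a * \<beta> i \<in> G (p + q i - 1)" by (rule Gmul[OF ha(1) hi(3)]) simp
    then show "\<xi> i + a * \<beta> i \<in> G (p + q i - 1) \<and> d (\<xi> i + a * \<beta> i) = a * (b i + d (\<beta> i))"
      using hi ha by (auto intro: Gadd simp: leib[OF ha(1)] distrib_left sgn_deg_even)
  qed
  have "c = cls G d (massey_deg n p q) (SS n p q (\<lambda>i. b i + d (\<beta> i)) (\<lambda>i. \<xi> i + a * \<beta> i) 1)"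
    unfolding c by (rule sym, rule cls_SS_eq[OF EF(1) EF(2)])
  then show "c \<in> massey G d n p a q (\<lambda>i. b i + d (\<beta> i))" unfolding massey_SS using sol2 by blast
qed

lemma M_inv:
  assumes ha: "a \<in> G p" "d a = 0" "even p"
    and hb: "\<forall>i\<in>{1..n}. b i \<in> G (q i) \<and> d (b i) = 0"
    and hal: "\<alpha> \<in> G (p - 1)" and a2: "a2 = a + d \<alpha>"
    and hbt: "\<forall>i\<in>{1..n}. \<beta> i \<in> G (q i - 1) \<and> b2 i = b i + d (\<beta> i)"
  shows "massey G d n p a q b = massey G d n p a2 q b2"
proof -
  have ha2: "a2 \<in> G p" "d a2 = 0" using ha hal a2 by (auto intro!: Gadd dG')
  have hb2: "\<forall>i\<in>{1..n}. b2 i \<in> G (q i) \<and> d (b2 i) = 0" using hb hbt by (auto intro!: Gadd dG')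
  have c1: "massey G d n p a2 q b2 = massey G d n p a2 q (\<lambda>i. b i + d (\<beta> i))"
    by (rule massey_cong) (use hbt in auto)
  have c2: "massey G d n p a q b = massey G d n p a q (\<lambda>i. b2 i + d (- \<beta> i))"
    by (rule massey_cong) (use hbt in auto)
  have "massey G d n p a q b \<subseteq> massey G d n p (a + d \<alpha>) q b" by (rule M_alpha_sub[OF ha hb hal])
  also have "\<dots> \<subseteq> massey G d n p a2 q b2" unfolding c1 a2[symmetric]
    by (rule M_beta_sub[OF ha2 ha(3) hb]) (use hbt in auto)
  finally have s1: "massey G d n p a q b \<subseteq> massey G d n p a2 q b2" .
  have "massey G d n p a2 q b2 \<subseteq> massey G d n p (a2 + d (- \<alpha>)) q b2"
    by (rule M_alpha_sub[OF ha2 ha(3) hb2]) (use hal Gneg in auto)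
  also have "a2 + d (- \<alpha>) = a" using a2 by simp
  also have "massey G d n p a q b2 \<subseteq> massey G d n p a q b" unfolding c2
    by (rule M_beta_sub[OF ha hb2]) (use hbt Gneg in auto)
  finally show ?thesis using s1 by blast
qed

end

lemma SS_cong: "\<forall>i\<in>{m..n}. \<xi> i = \<xi>2 i \<Longrightarrow> SS n p q b \<xi> m = SS n p q b \<xi>2 m"
  unfolding SS_def
  by (intro sum.cong refl arg_cong2[where f="(*)"] arg_cong[where f=prod_list] map_cong) auto

lemma hom_parts:
  assumes "dga_hom GB dB GA dA \<psi>"
  shows "linear \<psi>" "\<psi> 1 = 1" "\<And>x y. \<psi> (x * y) = \<psi> x * \<psi> y" "\<And>x k. x \<in> GB k \<Longrightarrow> \<psi> x \<in> GA k"
    "\<And>x. \<psi> (dB x) = dA (\<psi> x)"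
  using assms unfolding dga_hom_def by blast+

lemma psi_prod_list:
  assumes "dga_hom GB dB GA dA \<psi>"
  shows "\<psi> (prod_list (map f xs)) = prod_list (map (\<lambda>j. \<psi> (f j)) xs)"
  by (induction xs) (simp_all add: hom_parts[OF assms])

lemma psi_SS:
  assumes "dga_hom GB dB GA dA \<psi>"
  shows "\<psi> (SS n p q b \<xi> m) = SS n p q (\<lambda>i. \<psi> (b i)) (\<lambda>i. \<psi> (\<xi> i)) m"
proof -
  have lin: "linear \<psi>" by (rule hom_parts(1)[OF assms])
  show ?thesis unfolding SS_def
    by (simp add: linear_sum[OF lin] hom_parts(3)[OF assms] psi_prod_list[OF assms] bar_def
        linear_scale[OF lin] comp_def)
qed

lemma hmap_cls:
  assumes A: "dga GA dA" and B: "dga GB dB" and h: "dga_hom GB dB GA dA \<psi>"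
  shows "hmap GA dA k \<psi> (cls GB dB k x) = cls GA dA k (\<psi> x)"
proof -
  interpret A: dgl GA dA by (rule dgl.intro[OF A])
  interpret B: dgl GB dB by (rule dgl.intro[OF B])
  have "x \<in> cls GB dB k x" unfolding cls_def using B.G0[of "k-1"] by (auto intro!: exI[of _ 0])
  then have "(SOME y. y \<in> cls GB dB k x) \<in> cls GB dB k x" by (rule someI)
  then obtain z where z: "z \<in> GB (k - 1)" "(SOME y. y \<in> cls GB dB k x) = x + dB z"
    unfolding cls_def by blast
  have lin: "linear \<psi>" by (rule hom_parts(1)[OF h])
  have "hmap GA dA k \<psi> (cls GB dB k x) = cls GA dA k (\<psi> x + dA (\<psi> z))"
    unfolding hmap_def z(2) by (simp add: linear_add[OF lin] hom_parts(5)[OF h])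
  also have "\<dots> = cls GA dA k (\<psi> x)" by (rule A.cls_shift) (rule hom_parts(4)[OF h z(1)])
  finally show ?thesis .
qed


lemma part2:
  assumes A: "dga GA dA" and B: "dga GB dB" and qi: "quasi_iso GB dB GA dA \<psi>"
    and md: "massey_defined GB dB n p a' q b'"
  shows "hmap GA dA (massey_deg n p q) \<psi> ` massey GB dB n p a' q b'
             = massey GA dA n p (\<psi> a') q (\<lambda>i. \<psi> (b' i))"
proof -
  interpret A: dgl GA dA by (rule dgl.intro[OF A])
  interpret B: dgl GB dB by (rule dgl.intro[OF B])
  have h: "dga_hom GB dB GA dA \<psi>" using qi unfolding quasi_iso_def by blast
  have bij: "\<And>k. bij_betw (hmap GA dA k \<psi>) (cohom GB dB k) (cohom GA dA k)"
    using qi unfolding quasi_iso_def by blast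
  note hp = hom_parts[OF h]
  have lin: "linear \<psi>" by (rule hp(1))
  define N where "N = massey_deg n p q"
  have ha': "a' \<in> GB p" "dB a' = 0" "even p"
    and hb': "\<forall>i\<in>{1..n}. b' i \<in> GB (q i) \<and> dB (b' i) = 0 \<and> exact_in GB dB (p + q i) (a' * b' i)"
    using md unfolding massey_defined_def by auto
  have ha: "\<psi> a' \<in> GA p" "dA (\<psi> a') = 0" "even p" using ha' hp(4) hp(5)[of a', symmetric]
    by (auto simp: linear_0[OF lin])
  have img: "\<And>\<xi>'. hmap GA dA N \<psi> (cls GB dB N (SS n p q b' \<xi>' 1))
     = cls GA dA N (SS n p q (\<lambda>i. \<psi> (b' i)) (\<lambda>i. \<psi> (\<xi>' i)) 1)"
    by (simp add: hmap_cls[OF A B h] psi_SS[OF h])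
  show ?thesis unfolding N_def[symmetric]
  proof (intro set_eqI iffI)
    fix c assume "c \<in> hmap GA dA N \<psi> ` massey GB dB n p a' q b'"
    then obtain y where y: "y \<in> massey GB dB n p a' q b'" "c = hmap GA dA N \<psi> y" by blast
    then obtain \<xi>' where yy: "y = cls GB dB N (SS n p q b' \<xi>' 1)"
      and sol: "\<forall>i\<in>{1..n}. \<xi>' i \<in> GB (p + q i - 1) \<and> dB (\<xi>' i) = a' * b' i"
      unfolding B.massey_SS N_def by blast
    have c: "c = cls GA dA N (SS n p q (\<lambda>i. \<psi> (b' i)) (\<lambda>i. \<psi> (\<xi>' i)) 1)"
      using y(2) unfolding yy img .
    have "\<forall>i\<in>{1..n}. \<psi> (\<xi>' i) \<in> GA (p + q i - 1) \<and> dA (\<psi> (\<xi>' i)) = \<psi> a' * \<psi> (b' i)"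
      using sol hp by (metis)
    then show "c \<in> massey GA dA n p (\<psi> a') q (\<lambda>i. \<psi> (b' i))"
      unfolding A.massey_SS N_def[symmetric] c by blast
  next
    fix c assume "c \<in> massey GA dA n p (\<psi> a') q (\<lambda>i. \<psi> (b' i))"
    then obtain \<xi> where c: "c = cls GA dA N (SS n p q (\<lambda>i. \<psi> (b' i)) \<xi> 1)"
      and sol: "\<forall>i\<in>{1..n}. \<xi> i \<in> GA (p + q i - 1) \<and> dA (\<xi> i) = \<psi> a' * \<psi> (b' i)"
      unfolding A.massey_SS N_def by blast
    have "\<forall>i\<in>{1..n}. \<exists>y. fst y \<in> GB (p + q i - 1) \<and> dB (fst y) = a' * b' i
          \<and> snd y \<in> GA (p + q i - 1 - 1) \<and> \<xi> i = \<psi> (fst y) + dA (snd y)"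
    proof
      fix i assume i: "i \<in> {1..n}"
      define k where "k = p + q i - 1"
      obtain \<eta> where eta: "\<eta> \<in> GB k" "a' * b' i = dB \<eta>"
        using hb' i unfolding exact_in_def k_def by fastforce
      define w where "w = \<xi> i - \<psi> \<eta>"
      have de: "dA (\<psi> \<eta>) = \<psi> a' * \<psi> (b' i)" using hp(5)[of \<eta>] eta(2) hp(3) by metis
      have w: "w \<in> GA k" "dA w = 0" unfolding w_def using sol i eta hp(4) de
        by (auto intro!: A.Gdiff simp: k_def)
      then have "cls GA dA k w \<in> cohom GA dA k" unfolding cohom_def by blast
      then obtain c' where c': "c' \<in> cohom GB dB k" "hmap GA dA k \<psi> c' = cls GA dA k w"
        using bij[of k] unfolding bij_betw_def by (metis imageE)
      then obtain z where z: "z \<in> GB k" "dB z = 0" "c' = cls GB dB k z" unfolding cohom_def by blast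
      have "cls GA dA k w = cls GA dA k (\<psi> z)" using c'(2) unfolding z(3) hmap_cls[OF A B h] by simp
      then obtain th where th: "th \<in> GA (k - 1)" "w = \<psi> z + dA th" using A.cls_eqD by blast
      show "\<exists>y. fst y \<in> GB (p + q i - 1) \<and> dB (fst y) = a' * b' i
          \<and> snd y \<in> GA (p + q i - 1 - 1) \<and> \<xi> i = \<psi> (fst y) + dA (snd y)"
      proof (intro exI[of _ "(\<eta> + z, th)"] conjI)
        show "fst (\<eta> + z, th) \<in> GB (p + q i - 1)" using eta z by (simp add: B.Gadd k_def)
        show "dB (fst (\<eta> + z, th)) = a' * b' i" using eta z by simp
        show "snd (\<eta> + z, th) \<in> GA (p + q i - 1 - 1)" using th by (simp add: k_def)
        show "\<xi> i = \<psi> (fst (\<eta> + z, th)) + dA (snd (\<eta> + z, th))"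
          using th(2) unfolding w_def by (simp add: linear_add[OF lin] algebra_simps)
      qed
    qed
    then obtain f where f: "\<forall>i\<in>{1..n}. fst (f i) \<in> GB (p + q i - 1) \<and> dB (fst (f i)) = a' * b' i
          \<and> snd (f i) \<in> GA (p + q i - 1 - 1) \<and> \<xi> i = \<psi> (fst (f i)) + dA (snd (f i))"
      by metis
    define \<xi>' where "\<xi>' = (\<lambda>i. fst (f i))"
    define \<theta> where "\<theta> = (\<lambda>i. snd (f i))"
    have hA: "\<forall>i\<in>{1..n}. \<psi> (\<xi>' i) \<in> GA (p + q i - 1) \<and> dA (\<psi> (\<xi>' i)) = \<psi> a' * \<psi> (b' i)
        \<and> \<psi> (b' i) \<in> GA (q i) \<and> dA (\<psi> (b' i)) = 0"
    proof
      fix i assume i: "i \<in> {1..n}"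
      have f': "\<xi>' i \<in> GB (p + q i - 1)" "dB (\<xi>' i) = a' * b' i" using f i unfolding \<xi>'_def by auto
      have b': "b' i \<in> GB (q i)" "dB (b' i) = 0" using hb' i by auto
      have e1: "dA (\<psi> (\<xi>' i)) = \<psi> a' * \<psi> (b' i)" using hp(5)[of "\<xi>' i"] f' hp(3) by metis
      have e2: "dA (\<psi> (b' i)) = 0" using hp(5)[of "b' i"] b' linear_0[OF lin] by metis
      show "\<psi> (\<xi>' i) \<in> GA (p + q i - 1) \<and> dA (\<psi> (\<xi>' i)) = \<psi> a' * \<psi> (b' i)
        \<and> \<psi> (b' i) \<in> GA (q i) \<and> dA (\<psi> (b' i)) = 0" using e1 e2 f'(1) b'(1) hp(4) by blast
    qed
    have ht: "\<forall>i\<in>{1..n}. \<theta> i \<in> GA (p + q i - 1 - 1)" using f unfolding \<theta>_def by auto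
    obtain E F where EF: "E \<in> GA (degT n p q 1 - p)"
       "SS n p q (\<lambda>i. \<psi> (b' i)) (\<lambda>i. \<psi> (\<xi>' i) + dA (\<theta> i)) 1
          - SS n p q (\<lambda>i. \<psi> (b' i)) (\<lambda>i. \<psi> (\<xi>' i)) 1 = dA E"
      using A.inv_theta[OF ha hA ht, of 1] by auto
    have eqS: "SS n p q (\<lambda>i. \<psi> (b' i)) (\<lambda>i. \<psi> (\<xi>' i) + dA (\<theta> i)) 1 = SS n p q (\<lambda>i. \<psi> (b' i)) \<xi> 1"
      by (rule SS_cong) (use f in \<open>auto simp: \<xi>'_def \<theta>_def\<close>)
    have solB: "\<forall>i\<in>{1..n}. \<xi>' i \<in> GB (p + q i - 1) \<and> dB (\<xi>' i) = a' * b' i"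
      using f unfolding \<xi>'_def by auto
    have "c = cls GA dA N (SS n p q (\<lambda>i. \<psi> (b' i)) (\<lambda>i. \<psi> (\<xi>' i)) 1)"
      unfolding c N_def by (rule A.cls_SS_eq[OF EF(1) EF(2)[unfolded eqS]])
    also have "\<dots> = hmap GA dA N \<psi> (cls GB dB N (SS n p q b' \<xi>' 1))" by (rule img[symmetric])
    finally show "c \<in> hmap GA dA N \<psi> ` massey GB dB n p a' q b'"
      unfolding B.massey_SS N_def using solB by blast
  qed
qed

theorem lemma2p9:
  fixes GA :: "int \<Rightarrow> 'a::real_algebra_1 set" and dA :: "'a \<Rightarrow> 'a"
    and GB :: "int \<Rightarrow> 'b::real_algebra_1 set" and dB :: "'b \<Rightarrow> 'b"
    and \<psi> :: "'b \<Rightarrow> 'a" and n :: nat and p :: int and q :: "nat \<Rightarrow> int"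
  assumes "dga GA dA" and "dga GB dB" and "quasi_iso GB dB GA dA \<psi>"
    and "1 \<le> n" and "0 \<le> p" and "\<forall>i\<in>{1..n}. 0 \<le> q i"
  shows
   "(\<forall>a b a' b'.
       massey_defined GA dA n p a q b
       \<and> a' \<in> GB p \<and> dB a' = 0
       \<and> cls GA dA p (\<psi> a') = cls GA dA p a
       \<and> (\<forall>i\<in>{1..n}. b' i \<in> GB (q i) \<and> dB (b' i) = 0
                      \<and> cls GA dA (q i) (\<psi> (b' i)) = cls GA dA (q i) (b i))
     \<longrightarrow> massey_defined GB dB n p a' q b'
         \<and> hmap GA dA (massey_deg n p q) \<psi> ` massey GB dB n p a' q b'
             = massey GA dA n p a q b)
  \<and> (\<forall>a' b'.
       massey_defined GB dB n p a' q b'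
     \<longrightarrow> hmap GA dA (massey_deg n p q) \<psi> ` massey GB dB n p a' q b'
             = massey GA dA n p (\<psi> a') q (\<lambda>i. \<psi> (b' i)))"
proof (intro conjI allI impI)
  interpret A: dgl GA dA by (rule dgl.intro[OF assms(1)])
  interpret B: dgl GB dB by (rule dgl.intro[OF assms(2)])
  have h: "dga_hom GB dB GA dA \<psi>" using assms(3) unfolding quasi_iso_def by blast
  have bij: "\<And>k. bij_betw (hmap GA dA k \<psi>) (cohom GB dB k) (cohom GA dA k)"
    using assms(3) unfolding quasi_iso_def by blast
  note hp = hom_parts[OF h]
  have lin: "linear \<psi>" by (rule hp(1))
  {
    fix a' b' assume "massey_defined GB dB n p a' q b'"
    then show "hmap GA dA (massey_deg n p q) \<psi> ` massey GB dB n p a' q b'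
             = massey GA dA n p (\<psi> a') q (\<lambda>i. \<psi> (b' i))"
      by (rule part2[OF assms(1,2,3)])
  }
  note P2 = this
  fix a b a' b'
  assume H: "massey_defined GA dA n p a q b \<and> a' \<in> GB p \<and> dB a' = 0 \<and>
       cls GA dA p (\<psi> a') = cls GA dA p a \<and>
       (\<forall>i\<in>{1..n}. b' i \<in> GB (q i) \<and> dB (b' i) = 0 \<and> cls GA dA (q i) (\<psi> (b' i)) = cls GA dA (q i) (b i))"
  have ha: "a \<in> GA p" "dA a = 0" "even p"
    and hb: "\<forall>i\<in>{1..n}. b i \<in> GA (q i) \<and> dA (b i) = 0 \<and> exact_in GA dA (p + q i) (a * b i)"
    using H unfolding massey_defined_def by auto
  have ha': "a' \<in> GB p" "dB a' = 0" using H by auto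
  have hb': "\<forall>i\<in>{1..n}. b' i \<in> GB (q i) \<and> dB (b' i) = 0 \<and> cls GA dA (q i) (\<psi> (b' i)) = cls GA dA (q i) (b i)"
    using H by auto
  obtain \<alpha> where al: "\<alpha> \<in> GA (p - 1)" "\<psi> a' = a + dA \<alpha>"
    using A.cls_eqD[of p "\<psi> a'" a] H by blast
  have "\<forall>i\<in>{1..n}. \<exists>\<beta>. \<beta> \<in> GA (q i - 1) \<and> \<psi> (b' i) = b i + dA \<beta>"
    using hb' A.cls_eqD by blast
  then obtain \<beta> where bt: "\<forall>i\<in>{1..n}. \<beta> i \<in> GA (q i - 1) \<and> \<psi> (b' i) = b i + dA (\<beta> i)"
    by metis
  have MD: "massey_defined GB dB n p a' q b'"
    unfolding massey_defined_def
  proof (intro conjI ballI)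
    show "a' \<in> GB p" "dB a' = 0" "even p" using ha' ha by auto
    fix i assume i: "i \<in> {1..n}"
    show "b' i \<in> GB (q i)" "dB (b' i) = 0" using hb' i by auto
    define K where "K = p + q i"
    have bi: "b i \<in> GA (q i)" "dA (b i) = 0" "exact_in GA dA K (a * b i)" using hb i unfolding K_def by auto
    obtain y where y: "y \<in> GA (K - 1)" "a * b i = dA y" using bi(3) unfolding exact_in_def by blast
    have bti: "\<beta> i \<in> GA (q i - 1)" "\<psi> (b' i) = b i + dA (\<beta> i)" using bt i by auto
    define w where "w = y + \<alpha> * b i + a * \<beta> i + \<alpha> * dA (\<beta> i)"
    have m1: "\<alpha> * b i \<in> GA (K - 1)" by (rule A.Gmul[OF al(1) bi(1)]) (simp add: K_def)
    have m2: "a * \<beta> i \<in> GA (K - 1)" by (rule A.Gmul[OF ha(1) bti(1)]) (simp add: K_def)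
    have m3: "\<alpha> * dA (\<beta> i) \<in> GA (K - 1)" by (rule A.Gmul[OF al(1) A.dG[OF bti(1)]]) (simp add: K_def)
    have wm: "w \<in> GA (K - 1)" unfolding w_def
      using y(1) m1 m2 m3 by (intro A.Gadd)
    have "\<psi> (a' * b' i) = (a + dA \<alpha>) * (b i + dA (\<beta> i))" using hp(3) al(2) bti(2) by simp
    also have "\<dots> = dA w" unfolding w_def
      by (simp add: A.leib[OF al(1)] A.leib[OF ha(1)] bi ha sgn_deg_even y(2)[symmetric] algebra_simps)
    finally have pw: "\<psi> (a' * b' i) = dA w" .
    have mem: "a' * b' i \<in> GB K" "dB (a' * b' i) = 0"
      using B.Gmul[OF ha'(1), of "b' i" "q i"] hb' i B.leib[OF ha'(1), of "b' i"] ha'(2)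
      unfolding K_def by auto
    have c1: "cls GB dB K (a' * b' i) \<in> cohom GB dB K" using mem unfolding cohom_def by blast
    have c0: "cls GB dB K 0 \<in> cohom GB dB K" using B.G0 unfolding cohom_def by auto
    have "hmap GA dA K \<psi> (cls GB dB K (a' * b' i)) = cls GA dA K (0 + dA w)"
      unfolding hmap_cls[OF assms(1,2) h] pw by simp
    also have "\<dots> = cls GA dA K 0" by (rule A.cls_shift[OF wm])
    also have "\<dots> = hmap GA dA K \<psi> (cls GB dB K 0)"
      unfolding hmap_cls[OF assms(1,2) h] by (simp add: linear_0[OF lin])
    finally have "cls GB dB K (a' * b' i) = cls GB dB K 0"
      using bij[of K] c1 c0 unfolding bij_betw_def inj_on_def by blast
    then obtain z where "z \<in> GB (K - 1)" "a' * b' i = 0 + dB z" using B.cls_eqD by blast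
    then show "exact_in GB dB (p + q i) (a' * b' i)" unfolding exact_in_def K_def by auto
  qed
  show "massey_defined GB dB n p a' q b'" by (rule MD)
  have "massey GA dA n p a q b = massey GA dA n p (\<psi> a') q (\<lambda>i. \<psi> (b' i))"
    by (rule A.M_inv[OF ha, where \<alpha>=\<alpha> and \<beta>=\<beta>]) (use hb al bt in auto)
  then show "hmap GA dA (massey_deg n p q) \<psi> ` massey GB dB n p a' q b' = massey GA dA n p a q b"
    using P2[OF MD] by simp
qed

end
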